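(* Let $n\ge 1$ and let $q$ be generic. Regard ${\mathbb{C}}^n$ as the $n$-dimensional irreducible $U_q(sl_2)$-module $V_{n-1}$. Then its braided zeta function is \[\zeta_t(V_{n-1})=\prod_{\substack{j=-(n-1)\\ \text{step } 2}}^{n-1}\frac{1}{1-q^jt},\] i.e. the product of $1/(1-q^jt)$ over $j\in\{-(n-1),-(n-3),\dots,n-1\}$.
   Context: Throughout, $q\in{\mathbb{C}}$ is generic (not a root of unity) and $(m)_q=(q^m-q^{-m})/(q-q^{-1})$. $V_p$ denotes the irreducible $(p+1)$-dimensional module of $U_q(sl_2)$ (the $q$-deformation of the irreducible $(p+1)$-dimensional $sl_2$-module, also denoted $V_p$). Finite-dimensional $U_q(sl_2)$-modules form a ribbon braided category whose multiplicative braided dimension satisfies $\underline{\dim}'(V_p)=(p+1)_q$, extended additively to direct sums. For a module $A$, $A^{(j)}\subseteq A^{\otimes j}$ is the subspace invariant under the $q$-Hecke algebra generated by (suitably normalised) braidings of adjacent tensor factors; for generic $q$, $A^{(j)}$ decomposes into irreducibles $V_p$ with the same multiplicities as the classical symmetric power $S^j(A)$ of the corresponding $sl_2$-module. The braided zeta function is $\zeta_t(A)=\sum_{j\ge0}t^j\,\underline{\dim}'(A^{(j)})$. *)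

theory Defs
  imports Complex_Main "HOL-Library.Multiset" "HOL-Computational_Algebra.Formal_Power_Series"
begin

definition qint :: "complex \<Rightarrow> nat \<Rightarrow> complex" where
  "qint q m = (q ^ m - inverse q ^ m) / (q - inverse q)"

definition generic_q :: "complex \<Rightarrow> bool" where
  "generic_q q \<longleftrightarrow> q \<noteq> 0 \<and> (\<forall>k::nat. k > 0 \<longrightarrow> q ^ k \<noteq> 1)"

text \<open>A finite-dimensional (q-deformed) sl_2-module, up to isomorphism, is recorded by
  its multiplicity function: m p = multiplicity of V_p.  The multiplicative braided
  dimension is extended additively: dim'(V_p) = (p+1)_q.\<close>
definition braided_dim :: "complex \<Rightarrow> (nat \<Rightarrow> int) \<Rightarrow> complex" where
  "braided_dim q m = (\<Sum>p\<in>{p. m p \<noteq> 0}. of_int (m p) * qint q (p + 1))"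

text \<open>Weights of V_{n-1} = C^n: the basis vectors e_0..e_{n-1} have weights 2i-(n-1).
  Weight multiplicity of the classical symmetric power S^j(V_{n-1}) at weight w:
  number of degree-j monomials (multisets of basis indices) of total weight w.\<close>
definition sym_wt_mult :: "nat \<Rightarrow> nat \<Rightarrow> int \<Rightarrow> nat" where
  "sym_wt_mult n j w = card {M. set_mset M \<subseteq> {..<n} \<and> size M = j \<and>
      sum_mset (image_mset (\<lambda>i. 2 * int i - (int n - 1)) M) = w}"

text \<open>Multiplicity of V_p in the classical symmetric power S^j(V_{n-1}) (standard sl_2
  theory: dim of weight-p space minus dim of weight-(p+2) space). By the stated fact,
  this is also the multiplicity of V_p in the braided symmetric power V_{n-1}^{(j)}.\<close>
definition sym_irr_mult :: "nat \<Rightarrow> nat \<Rightarrow> nat \<Rightarrow> int" where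
  "sym_irr_mult n j p = int (sym_wt_mult n j (int p)) - int (sym_wt_mult n j (int p + 2))"

definition braided_zeta :: "complex \<Rightarrow> nat \<Rightarrow> complex fps" where
  "braided_zeta q n = Abs_fps (\<lambda>j. braided_dim q (sym_irr_mult n j))"

end

theory Submission
  imports Defs
begin
lemma geom_inv:
  fixes c :: complex
  shows "inverse (1 - fps_const c * fps_X) = Abs_fps (\<lambda>a. c ^ a)"
proof (rule fps_inverse_unique)
  have "(1 - fps_const c * fps_X) * Abs_fps (\<lambda>a. c ^ a)
      = Abs_fps (\<lambda>a. c ^ a) - fps_const c * (fps_X * Abs_fps (\<lambda>a. c ^ a))"
    by (simp add: algebra_simps)
  also have "\<dots> = 1"
    by (rule fps_ext) (auto simp: power_Suc[symmetric] simp del: power_Suc)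
  finally show "(1 - fps_const c * fps_X) * Abs_fps (\<lambda>a. c ^ a) = 1" .
qed

definition SS :: "nat \<Rightarrow> nat \<Rightarrow> nat multiset set" where
  "SS n j = {M. set_mset M \<subseteq> {..<n} \<and> size M = j}"

lemma SS_finite: "finite (SS n j)"
  using finite_multisets_of_size[of "{..<n}" j] by (simp add: SS_def multisets_of_size_def)

lemma SS_0: "SS 0 j = (if j = 0 then {{#}} else {})"
  by (auto simp: SS_def)

lemma filter_low:
  assumes "set_mset M \<subseteq> {..<Suc n}"
  shows "filter_mset (\<lambda>k. k < n) M + replicate_mset (size M - size (filter_mset (\<lambda>k. k < n) M)) n = M"
proof -
  have A: "filter_mset (\<lambda>k. \<not> k < n) M = replicate_mset (count M n) n"
  proof -
    have "filter_mset (\<lambda>k. \<not> k < n) M = filter_mset (\<lambda>k. k = n) M"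
      using assms by (intro filter_mset_cong) auto
    then show ?thesis by (simp add: filter_eq_replicate_mset)
  qed
  have B: "M = filter_mset (\<lambda>k. k < n) M + filter_mset (\<lambda>k. \<not> k < n) M"
    by (simp add: multiset_partition)
  have "size M = size (filter_mset (\<lambda>k. k < n) M) + count M n"
    using arg_cong[OF B, of size] A by simp
  then show ?thesis using A B by simp
qed

lemma gen_step:
  fixes x :: "nat \<Rightarrow> complex"
  shows "(\<Sum>M\<in>SS (Suc n) j. prod_mset (image_mset x M))
       = (\<Sum>i=0..j. (\<Sum>M\<in>SS n i. prod_mset (image_mset x M)) * x n ^ (j - i))"
proof -
  have "(\<Sum>M\<in>SS (Suc n) j. prod_mset (image_mset x M))
      = (\<Sum>(i,M')\<in>Sigma {0..j} (SS n). prod_mset (image_mset x M') * x n ^ (j - i))"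
  proof (rule sum.reindex_bij_witness[where i = "\<lambda>(i,M'). M' + replicate_mset (j - i) n"
        and j = "\<lambda>M. (size (filter_mset (\<lambda>k. k < n) M), filter_mset (\<lambda>k. k < n) M)"])
    fix a assume a: "a \<in> SS (Suc n) j"
    then show "(case (size (filter_mset (\<lambda>k. k < n) a), filter_mset (\<lambda>k. k < n) a) of
             (i, M') \<Rightarrow> M' + replicate_mset (j - i) n) = a"
      using filter_low[of a n] by (auto simp: SS_def)
    show "(size (filter_mset (\<lambda>k. k < n) a), filter_mset (\<lambda>k. k < n) a) \<in> Sigma {0..j} (SS n)"
      using a by (auto simp: SS_def size_filter_mset_lesseq)
  next
    fix b assume b: "b \<in> Sigma {0..j} (SS n)"
    then obtain i M' where bi: "b = (i, M')" "i \<le> j" "set_mset M' \<subseteq> {..<n}" "size M' = i"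
      by (auto simp: SS_def)
    have f1: "filter_mset (\<lambda>k. k < n) M' = M'"
      using bi by (auto intro!: filter_mset_True[THEN trans] simp: filter_mset_eq_conv)
    have f2: "filter_mset (\<lambda>k. k < n) (replicate_mset (j - i) n) = {#}"
      by (auto simp: filter_mset_eq_conv)
    show "(size (filter_mset (\<lambda>k. k < n) (case b of (i, M') \<Rightarrow> M' + replicate_mset (j - i) n)),
          filter_mset (\<lambda>k. k < n) (case b of (i, M') \<Rightarrow> M' + replicate_mset (j - i) n)) = b"
      using bi f1 f2 by simp
    show "(case b of (i, M') \<Rightarrow> M' + replicate_mset (j - i) n) \<in> SS (Suc n) j"
      using bi by (auto simp: SS_def)
  next
    fix a assume a: "a \<in> SS (Suc n) j"
    have "prod_mset (image_mset x a) = prod_mset (image_mset x (filter_mset (\<lambda>k. k < n) a + replicate_mset (size a - size (filter_mset (\<lambda>k. k < n) a)) n))"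
      using filter_low[of a n] a by (simp add: SS_def)
    then show "(case (size (filter_mset (\<lambda>k. k < n) a), filter_mset (\<lambda>k. k < n) a) of
             (i, M') \<Rightarrow> prod_mset (image_mset x M') * x n ^ (j - i)) = prod_mset (image_mset x a)"
      using a by (simp add: SS_def)
  qed
  also have "\<dots> = (\<Sum>i=0..j. \<Sum>M'\<in>SS n i. prod_mset (image_mset x M') * x n ^ (j - i))"
    by (subst sum.Sigma) (auto simp: SS_finite)
  also have "\<dots> = (\<Sum>i=0..j. (\<Sum>M\<in>SS n i. prod_mset (image_mset x M)) * x n ^ (j - i))"
    by (simp add: sum_distrib_right)
  finally show ?thesis .
qed

lemma gen_fun:
  fixes x :: "nat \<Rightarrow> complex"
  shows "Abs_fps (\<lambda>j. \<Sum>M\<in>SS n j. prod_mset (image_mset x M))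
       = (\<Prod>k<n. inverse (1 - fps_const (x k) * fps_X))"
proof (induction n)
  case 0
  show ?case by (rule fps_ext) (simp add: SS_0)
next
  case (Suc n)
  have "(\<Prod>k<Suc n. inverse (1 - fps_const (x k) * fps_X))
     = Abs_fps (\<lambda>j. \<Sum>M\<in>SS n j. prod_mset (image_mset x M)) * Abs_fps (\<lambda>a. x n ^ a)"
    by (simp add: Suc.IH geom_inv)
  also have "\<dots> = Abs_fps (\<lambda>j. \<Sum>M\<in>SS (Suc n) j. prod_mset (image_mset x M))"
    by (rule fps_ext) (simp add: fps_mult_nth gen_step)
  finally show ?case by simp
qed

lemma generic_facts:
  assumes "generic_q q"
  shows "q \<noteq> 0" "q - inverse q \<noteq> 0"
proof -
  show q0: "q \<noteq> 0" using assms by (simp add: generic_q_def)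
  show "q - inverse q \<noteq> 0"
  proof
    assume "q - inverse q = 0"
    then have "q * q = q * inverse q" by simp
    then have "q ^ 2 = 1" using q0 by (simp add: power2_eq_square)
    then show False using assms by (auto simp: generic_q_def dest: spec[of _ 2])
  qed
qed

lemma qint_diff:
  assumes q0: "q \<noteq> 0" and d: "q - inverse q \<noteq> 0"
  shows "qint q (Suc (Suc K)) - qint q K = q ^ Suc K + inverse q ^ Suc K"
proof -
  define r where "r = inverse q"
  have qr: "q * r = 1" using q0 by (simp add: r_def)
  have "(q ^ Suc K + r ^ Suc K) * (q - r) = (q ^ Suc (Suc K) - r ^ Suc (Suc K)) - (q ^ K - r ^ K)"
  proof -
    have "(q ^ Suc K + r ^ Suc K) * (q - r) = q*q*q^K - q^K * (q*r) + r^K * (q*r) - r*r*r^K"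
      by (simp add: algebra_simps)
    then show ?thesis using qr by (simp add: algebra_simps)
  qed
  then show ?thesis using d unfolding qint_def r_def[symmetric]
    by (simp add: diff_divide_distrib[symmetric] field_simps)
qed

lemma qint_0: "qint q 0 = 0" by (simp add: qint_def)
lemma qint_1: "q - inverse q \<noteq> 0 \<Longrightarrow> qint q (Suc 0) = 1" by (simp add: qint_def)

definition EE :: "complex \<Rightarrow> nat \<Rightarrow> complex" where
  "EE q p = (if p = 0 then 1 else q ^ p + inverse q ^ p)"

lemma telescope:
  fixes f :: "int \<Rightarrow> int"
  assumes q0: "q \<noteq> 0" and d: "q - inverse q \<noteq> 0"
  shows "(\<Sum>p\<le>K. of_int (f (int p) - f (int p + 2)) * qint q (p + 1))
     = (\<Sum>p\<le>K. of_int (f (int p)) * EE q p) - of_int (f (int K + 1)) * qint q K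
       - of_int (f (int K + 2)) * qint q (K + 1)"
proof (induction K)
  case 0
  then show ?case using d by (simp add: qint_0 qint_1 EE_def algebra_simps)
next
  case (Suc K)
  have e: "qint q (Suc (Suc K)) = qint q K + EE q (Suc K)"
    using qint_diff[OF q0 d, of K] by (simp add: EE_def algebra_simps)
  show ?case
    using Suc.IH e by (simp add: algebra_simps)
qed

lemma sym_sum:
  fixes f :: "int \<Rightarrow> int"
  assumes sym: "\<And>w. f (- w) = f w" and q0: "q \<noteq> 0"
  shows "(\<Sum>p\<le>K. of_int (f (int p)) * EE q p) = (\<Sum>w\<in>{- int K..int K}. of_int (f w) * q powi w)"
proof (induction K)
  case 0
  then show ?case by (simp add: EE_def)
next
  case (Suc K)
  have set: "{- int (Suc K)..int (Suc K)} = insert (- int (Suc K)) (insert (int (Suc K)) {- int K..int K})"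
    by auto
  have "(\<Sum>w\<in>{- int (Suc K)..int (Suc K)}. of_int (f w) * q powi w)
     = of_int (f (- int (Suc K))) * q powi (- int (Suc K)) + of_int (f (int (Suc K))) * q powi (int (Suc K))
       + (\<Sum>w\<in>{- int K..int K}. of_int (f w) * q powi w)"
    unfolding set by (simp add: algebra_simps)
  also have "\<dots> = of_int (f (int (Suc K))) * EE q (Suc K) + (\<Sum>w\<in>{- int K..int K}. of_int (f w) * q powi w)"
    using sym[of "int (Suc K)"] by (simp add: EE_def power_int_minus algebra_simps power_inverse del: of_nat_Suc)
  finally show ?case using Suc.IH by simp
qed

definition wt :: "nat \<Rightarrow> nat multiset \<Rightarrow> int" where
  "wt n M = sum_mset (image_mset (\<lambda>i. 2 * int i - (int n - 1)) M)"

lemma card_eq: "sym_wt_mult n j w = card {M\<in>SS n j. wt n M = w}"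
  unfolding sym_wt_mult_def SS_def wt_def by (simp add: conj_assoc)

lemma powi_sum_mset:
  fixes q :: complex
  assumes "q \<noteq> 0"
  shows "q powi sum_mset (image_mset f M) = prod_mset (image_mset (\<lambda>i. q powi f i) M)"
  by (induction M) (simp_all add: power_int_add assms)

lemma abs_sum_mset:
  fixes f :: "nat \<Rightarrow> int"
  assumes "\<And>x. x \<in># M \<Longrightarrow> \<bar>f x\<bar> \<le> b"
  shows "\<bar>sum_mset (image_mset f M)\<bar> \<le> int (size M) * b"
  using assms
proof (induction M)
  case empty then show ?case by simp
next
  case (add x M)
  have "\<bar>f x\<bar> \<le> b" using add.prems by simp
  moreover have "\<bar>sum_mset (image_mset f M)\<bar> \<le> int (size M) * b" using add by simp
  ultimately show ?case by (simp add: algebra_simps)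
qed

lemma wt_bound:
  assumes "M \<in> SS n j"
  shows "\<bar>wt n M\<bar> \<le> int (j * (n - 1))"
proof -
  have "\<bar>wt n M\<bar> \<le> int (size M) * (int n - 1)"
    unfolding wt_def using assms by (intro abs_sum_mset) (auto simp: SS_def)
  moreover have "n \<ge> 1 \<or> M = {#}"
  proof (cases "M = {#}")
    case False
    then obtain x where "x \<in># M" by (meson multiset_nonemptyE)
    then show ?thesis using assms by (auto simp: SS_def)
  qed simp
  ultimately show ?thesis using assms by (auto simp: SS_def of_nat_diff)
qed

lemma sum_mset_neg:
  fixes g :: "nat \<Rightarrow> int"
  shows "sum_mset (image_mset (\<lambda>i. - g i) M) = - sum_mset (image_mset g M)"
  by (induction M) simp_all

definition rf :: "nat \<Rightarrow> nat multiset \<Rightarrow> nat multiset" where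
  "rf n M = image_mset (\<lambda>i. n - 1 - i) M"

lemma rf_facts:
  assumes "M \<in> SS n j"
  shows "rf n (rf n M) = M" "rf n M \<in> SS n j" "wt n (rf n M) = - wt n M"
proof -
  have s: "set_mset M \<subseteq> {..<n}" using assms by (simp add: SS_def)
  show "rf n (rf n M) = M"
    unfolding rf_def multiset.map_comp using s
    by (subst image_mset_cong[where g = id]) auto
  show "rf n M \<in> SS n j" using assms by (auto simp: SS_def rf_def)
  have "image_mset (\<lambda>i. 2 * int i - (int n - 1)) (rf n M) = image_mset (\<lambda>i. - (2 * int i - (int n - 1))) M"
    unfolding rf_def multiset.map_comp using s
    by (intro image_mset_cong) (auto simp: of_nat_diff)
  then show "wt n (rf n M) = - wt n M" unfolding wt_def
    using sum_mset_neg[of "\<lambda>i. 2 * int i - (int n - 1)" M] by simp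
qed

lemma wt_sym: "card {M\<in>SS n j. wt n M = - w} = card {M\<in>SS n j. wt n M = w}"
proof -
  have "bij_betw (rf n) {M\<in>SS n j. wt n M = w} {M\<in>SS n j. wt n M = - w}"
    by (rule bij_betw_byWitness[where f' = "rf n"]) (auto simp: rf_facts)
  then show ?thesis by (simp add: bij_betw_same_card)
qed

lemma coeff_eq:
  fixes q :: complex
  assumes q0: "q \<noteq> 0" and d: "q - inverse q \<noteq> 0"
  shows "braided_dim q (sym_irr_mult n j) = (\<Sum>M\<in>SS n j. q powi wt n M)"
proof -
  define N where "N = j * (n - 1)"
  define f where "f w = int (card {M\<in>SS n j. wt n M = w})" for w
  have fz: "f w = 0" if "\<bar>w\<bar> > int N" for w
  proof -
    have "{M\<in>SS n j. wt n M = w} = {}" using wt_bound[of _ n j] that by (force simp: N_def)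
    then show ?thesis unfolding f_def by (metis card.empty of_nat_0)
  qed
  have fz2: "p \<le> N" if "f (int p) \<noteq> f (int p + 2)" for p
    using that fz[of "int p"] fz[of "int p + 2"] by (cases "p \<le> N") auto
  have fs: "f (- w) = f w" for w by (simp add: f_def wt_sym)
  have m: "sym_irr_mult n j p = f (int p) - f (int p + 2)" for p
    by (simp add: sym_irr_mult_def card_eq f_def)
  have "braided_dim q (sym_irr_mult n j) = (\<Sum>p\<le>N. of_int (f (int p) - f (int p + 2)) * qint q (p + 1))"
    unfolding braided_dim_def m
    by (rule sum.mono_neutral_left) (auto simp: fz2)
  also have "\<dots> = (\<Sum>p\<le>N. of_int (f (int p)) * EE q p)"
    unfolding telescope[OF q0 d, of f N] using fz[of "int N + 1"] fz[of "int N + 2"] by simp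
  also have "\<dots> = (\<Sum>w\<in>{- int N..int N}. of_int (f w) * q powi w)"
    by (rule sym_sum[of f, OF fs q0])
  also have "\<dots> = (\<Sum>w\<in>wt n ` SS n j. of_int (f w) * q powi w)"
  proof (rule sum.mono_neutral_right)
    show "wt n ` SS n j \<subseteq> {- int N..int N}" using wt_bound[of _ n j] by (force simp: N_def abs_le_iff)
    show "\<forall>i\<in>{- int N..int N} - wt n ` SS n j. of_int (f i) * q powi i = 0"
    proof
      fix i assume "i \<in> {- int N..int N} - wt n ` SS n j"
      then have "{M\<in>SS n j. wt n M = i} = {}" by auto
      then show "of_int (f i) * q powi i = 0" unfolding f_def by (metis card.empty of_nat_0 of_int_0 mult_zero_left)
    qed
  qed simp
  also have "\<dots> = (\<Sum>M\<in>SS n j. q powi wt n M)"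
    by (subst sum.image_gen[OF SS_finite, where g = "wt n"]) (simp add: f_def)
  finally show ?thesis .
qed

theorem theorem4p2:
  fixes q :: complex and n :: nat
  assumes "n \<ge> 1" and "generic_q q"
  shows "braided_zeta q n =
    (\<Prod>k<n. inverse (1 - fps_const (q powi (2 * int k - (int n - 1))) * fps_X))"
proof -
  note g = generic_facts[OF assms(2)]
  have "braided_zeta q n = Abs_fps (\<lambda>j. \<Sum>M\<in>SS n j. q powi wt n M)"
    unfolding braided_zeta_def by (simp add: coeff_eq[OF g])
  also have "\<dots> = Abs_fps (\<lambda>j. \<Sum>M\<in>SS n j. prod_mset (image_mset (\<lambda>k. q powi (2 * int k - (int n - 1))) M))"
    unfolding wt_def by (simp add: powi_sum_mset[OF g(1)])
  also have "\<dots> = (\<Prod>k<n. inverse (1 - fps_const (q powi (2 * int k - (int n - 1))) * fps_X))"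
    by (rule gen_fun)
  finally show ?thesis .
qed

end
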